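(* Fix integers $n\ge 3$, $k\ge 2$, $s>0$ and integers $d_i,g_i$ for $1\le i\le s$ with $d_i>g_i\ge 0$ for all $i$, such that $$\sum_{i=1}^{s}(kd_i+1-g_i)\le \binom{n+k}{n}.$$ Then $$\sum_{i=1}^{s}((k+1)d_i+1-g_i)<\binom{n+k+1}{n}.$$ *)

theory Defs
  imports Main
begin

end

theory Submission
  imports Defs
begin

theorem lemma3p11:
  fixes n k s :: nat and d g :: "nat \<Rightarrow> int"
  assumes "n \<ge> 3" and "k \<ge> 2" and "s > 0"
    and "\<And>i. 1 \<le> i \<Longrightarrow> i \<le> s \<Longrightarrow> d i > g i \<and> g i \<ge> 0"
    and "(\<Sum>i=1..s. int k * d i + 1 - g i) \<le> int ((n + k) choose n)"
  shows "(\<Sum>i=1..s. (int k + 1) * d i + 1 - g i) < int ((n + k + 1) choose n)"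
proof -
  define A where "A = (\<Sum>i=1..s. int k * d i + 1 - g i)"
  define D where "D = (\<Sum>i=1..s. d i)"
  define C where "C = int ((n + k) choose n)"
  define C' where "C' = int ((n + k + 1) choose n)"
  have bin: "(n + k + 1 - n) * ((n + k + 1) choose n) = (n + k + 1) * ((n + k + 1 - 1) choose n)"
    by (rule binomial_absorb_comp)
  hence binI: "(int k + 1) * C' = int (n + k + 1) * C"
  proof -
    have "(k + 1) * ((n + k + 1) choose n) = (n + k + 1) * ((n + k) choose n)" using bin by simp
    hence "int ((k + 1) * ((n + k + 1) choose n)) = int ((n + k + 1) * ((n + k) choose n))" by simp
    thus ?thesis unfolding C_def C'_def by (simp only: of_nat_mult of_nat_add of_nat_1 of_nat_numeral)
  qed
  have tgt: "(\<Sum>i=1..s. (int k + 1) * d i + 1 - g i) = A + D"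
    unfolding A_def D_def by (simp add: sum.distrib[symmetric] algebra_simps)
  have "(\<Sum>i=1..s. (int k - 1) * d i) < (\<Sum>i=1..s. int k * d i + 1 - g i)"
    using assms(3) assms(4) by (intro sum_strict_mono) (auto simp: algebra_simps, fastforce)
  hence AD: "(int k - 1) * D < A" unfolding A_def D_def by (simp add: sum_distrib_left)
  have AC: "A \<le> C" using assms(5) unfolding A_def C_def .
  have C0: "C \<ge> 0" unfolding C_def by simp
  have k: "int k \<ge> 2" using assms(2) by simp
  have nn: "int n \<ge> 3" using assms(1) by simp
  have "(int k - 1) * (A + D) < int k * A" using AD by (simp add: algebra_simps)
  also have "\<dots> \<le> int k * C" using AC k by simp
  finally have s1: "(int k + 1) * ((int k - 1) * (A + D)) < (int k + 1) * (int k * C)" using k by simp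
  have "int k * (int k + 1) \<le> (int k - 1) * int (n + k + 1)"
  proof -
    have "2 * (int n - 1) \<le> int k * (int n - 1)" using k nn by (intro mult_right_mono) auto
    hence "int n + 1 \<le> int k * (int n - 1)" using nn by (smt (verit))
    thus ?thesis by (simp add: algebra_simps)
  qed
  hence "(int k + 1) * (int k * C) \<le> (int k - 1) * (int (n + k + 1) * C)"
    using C0 mult_right_mono[of "int k * (int k + 1)" "(int k - 1) * int (n + k + 1)" C] by (simp add: algebra_simps)
  also have "\<dots> = (int k - 1) * ((int k + 1) * C')" using binI by simp
  finally have "(int k - 1) * ((int k + 1) * (A + D)) < (int k - 1) * ((int k + 1) * C')"
    using s1 by (simp add: algebra_simps)
  hence "(int k + 1) * (A + D) < (int k + 1) * C'" using k
    by (simp add: mult_less_cancel_left)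
  hence "A + D < C'" using k by (simp add: mult_less_cancel_left)
  thus ?thesis using tgt unfolding C'_def by simp
qed

end
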